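(* If $G$ is a graph without universal vertices, then $\eta(G\lor K_1)=\eta(G)$.
   Context: All graphs are finite, simple and undirected. A vertex $v$ of $G$ is universal if $N(v)=V(G)\setminus\{v\}$, where $N(v)$ is its set of neighbours. $K_1$ is the graph with a single vertex. For disjoint graphs $G_1,G_2$, the join $G_1\lor G_2$ has vertex set $V(G_1)\cup V(G_2)$ and edge set $E(G_1)\cup E(G_2)\cup\{(u,v):u\in V(G_1),v\in V(G_2)\}$. For a positive integer $k$, $[k]=\{1,\dots,k\}$. For a labeling $f:V(G)\to[k]$ and $S\subseteq V(G)$, $f(S)=\sum_{u\in S}f(u)$. A labeling $f:V(G)\to[k]$ is an additive $k$-coloring if $f(N(u))\neq f(N(v))$ for every edge $(u,v)$ of $G$. The additive chromatic number $\eta(G)$ is the least $k$ for which $G$ has an additive $k$-coloring. *)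

theory Defs
  imports Main
begin

definition simple_graph :: "'a set \<Rightarrow> ('a \<Rightarrow> 'a \<Rightarrow> bool) \<Rightarrow> bool" where
  "simple_graph V E \<longleftrightarrow> finite V \<and> (\<forall>u v. E u v \<longrightarrow> E v u)
     \<and> (\<forall>u. \<not> E u u) \<and> (\<forall>u v. E u v \<longrightarrow> u \<in> V \<and> v \<in> V)"

definition nbhd :: "'a set \<Rightarrow> ('a \<Rightarrow> 'a \<Rightarrow> bool) \<Rightarrow> 'a \<Rightarrow> 'a set" where
  "nbhd V E u = {v \<in> V. E u v}"

definition universal :: "'a set \<Rightarrow> ('a \<Rightarrow> 'a \<Rightarrow> bool) \<Rightarrow> 'a \<Rightarrow> bool" where
  "universal V E v \<longleftrightarrow> v \<in> V \<and> nbhd V E v = V - {v}"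

definition additive_coloring :: "'a set \<Rightarrow> ('a \<Rightarrow> 'a \<Rightarrow> bool) \<Rightarrow> nat \<Rightarrow> ('a \<Rightarrow> nat) \<Rightarrow> bool" where
  "additive_coloring V E k f \<longleftrightarrow> (\<forall>u\<in>V. f u \<in> {1..k})
     \<and> (\<forall>u v. E u v \<longrightarrow> sum f (nbhd V E u) \<noteq> sum f (nbhd V E v))"

definition additive_chromatic :: "'a set \<Rightarrow> ('a \<Rightarrow> 'a \<Rightarrow> bool) \<Rightarrow> nat" where
  "additive_chromatic V E = (LEAST k. k \<ge> 1 \<and> (\<exists>f. additive_coloring V E k f))"

text \<open>Join G \<or> K_1: the old vertices are tagged with Some, the new vertex is None.\<close>
definition join_K1_V :: "'a set \<Rightarrow> 'a option set" where
  "join_K1_V V = insert None (Some ` V)"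

fun join_K1_E :: "'a set \<Rightarrow> ('a \<Rightarrow> 'a \<Rightarrow> bool) \<Rightarrow> 'a option \<Rightarrow> 'a option \<Rightarrow> bool" where
  "join_K1_E V E (Some x) (Some y) = E x y"
| "join_K1_E V E None (Some y) = (y \<in> V)"
| "join_K1_E V E (Some x) None = (x \<in> V)"
| "join_K1_E V E None None = False"

end

theory Submission
  imports Defs
begin

lemma nb_some:
  assumes "simple_graph V E" "x \<in> V"
  shows "nbhd (join_K1_V V) (join_K1_E V E) (Some x) = insert None (Some ` nbhd V E x)"
  using assms unfolding nbhd_def join_K1_V_def simple_graph_def
  by (auto elim: join_K1_E.elims)

lemma nb_none:
  shows "nbhd (join_K1_V V) (join_K1_E V E) None = Some ` V"
  unfolding nbhd_def join_K1_V_def by (auto elim: join_K1_E.elims)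

lemma sum_some:
  assumes "simple_graph V E" "x \<in> V"
  shows "sum g (nbhd (join_K1_V V) (join_K1_E V E) (Some x)) = g None + sum (g \<circ> Some) (nbhd V E x)"
proof -
  have fin: "finite (nbhd V E x)" using assms unfolding simple_graph_def nbhd_def by auto
  show ?thesis unfolding nb_some[OF assms]
    using fin by (simp add: sum.reindex)
qed

lemma dir1:
  assumes G: "simple_graph V E" and "additive_coloring (join_K1_V V) (join_K1_E V E) k g"
  shows "additive_coloring V E k (g \<circ> Some)"
proof -
  have lab: "\<forall>u\<in>join_K1_V V. g u \<in> {1..k}"
   and ed: "\<forall>u v. join_K1_E V E u v \<longrightarrow> sum g (nbhd (join_K1_V V) (join_K1_E V E) u) \<noteq> sum g (nbhd (join_K1_V V) (join_K1_E V E) v)"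
    using assms(2) unfolding additive_coloring_def by auto
  have "\<forall>u\<in>V. (g \<circ> Some) u \<in> {1..k}" using lab unfolding join_K1_V_def by auto
  moreover have "\<forall>u v. E u v \<longrightarrow> sum (g \<circ> Some) (nbhd V E u) \<noteq> sum (g \<circ> Some) (nbhd V E v)"
  proof (intro allI impI)
    fix u v assume e: "E u v"
    then have uv: "u \<in> V" "v \<in> V" using G unfolding simple_graph_def by auto
    have "join_K1_E V E (Some u) (Some v)" using e by simp
    show "sum (g \<circ> Some) (nbhd V E u) \<noteq> sum (g \<circ> Some) (nbhd V E v)"
    proof (rule notI)
      assume h: "sum (g \<circ> Some) (nbhd V E u) = sum (g \<circ> Some) (nbhd V E v)"
      have "sum g (nbhd (join_K1_V V) (join_K1_E V E) (Some u)) = sum g (nbhd (join_K1_V V) (join_K1_E V E) (Some v))"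
        unfolding sum_some[OF G uv(1), of g] sum_some[OF G uv(2), of g] h ..
      thus False using ed \<open>join_K1_E V E (Some u) (Some v)\<close> by blast
    qed
  qed
  ultimately show ?thesis unfolding additive_coloring_def by blast
qed

lemma dir2:
  assumes G: "simple_graph V E" and nu: "\<forall>v\<in>V. \<not> universal V E v"
    and f: "additive_coloring V E k f" and k: "k \<ge> 1"
  shows "additive_coloring (join_K1_V V) (join_K1_E V E) k (\<lambda>x. case x of None \<Rightarrow> 1 | Some y \<Rightarrow> f y)"
    (is "additive_coloring _ _ k ?g")
proof -
  have lab: "\<forall>u\<in>V. f u \<in> {1..k}"
   and ed: "\<forall>u v. E u v \<longrightarrow> sum f (nbhd V E u) \<noteq> sum f (nbhd V E v)"
    using f unfolding additive_coloring_def by auto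
  have gs: "?g \<circ> Some = f" by auto
  have finV: "finite V" using G unfolding simple_graph_def by auto
  have sV: "sum ?g (nbhd (join_K1_V V) (join_K1_E V E) None) = sum f V"
    unfolding nb_none by (simp add: sum.reindex)
  have key: "sum f V \<ge> sum f (nbhd V E y) + 2" if y: "y \<in> V" for y
  proof -
    have sub: "nbhd V E y \<subseteq> V - {y}" using G y unfolding nbhd_def simple_graph_def by auto
    have "nbhd V E y \<noteq> V - {y}" using nu y unfolding universal_def by auto
    then obtain z where z: "z \<in> V" "z \<noteq> y" "z \<notin> nbhd V E y" using sub by blast
    have yn: "y \<notin> nbhd V E y" using sub by auto
    have "nbhd V E y \<union> {y, z} \<subseteq> V" using sub y z by auto
    hence "sum f (nbhd V E y \<union> {y, z}) \<le> sum f V" using finV by (intro sum_mono2) auto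
    moreover have "sum f (nbhd V E y \<union> {y, z}) = sum f (nbhd V E y) + f y + f z"
    proof -
      have fin: "finite (nbhd V E y)" using finV sub finite_subset by blast
      have "sum f (nbhd V E y \<union> {y, z}) = sum f (nbhd V E y) + sum f {y,z}"
        using fin yn z by (intro sum.union_disjoint) auto
      thus ?thesis using z by simp
    qed
    moreover have "f y \<ge> 1" "f z \<ge> 1" using lab y z by auto
    ultimately show ?thesis by linarith
  qed
  have "\<forall>u\<in>join_K1_V V. ?g u \<in> {1..k}" using lab k unfolding join_K1_V_def by auto
  moreover have "\<forall>u v. join_K1_E V E u v \<longrightarrow> sum ?g (nbhd (join_K1_V V) (join_K1_E V E) u) \<noteq> sum ?g (nbhd (join_K1_V V) (join_K1_E V E) v)"
  proof (intro allI impI)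
    fix u v assume e: "join_K1_E V E u v"
    show "sum ?g (nbhd (join_K1_V V) (join_K1_E V E) u) \<noteq> sum ?g (nbhd (join_K1_V V) (join_K1_E V E) v)"
    proof (cases u; cases v)
      fix x y assume uv: "u = Some x" "v = Some y"
      then have exy: "E x y" using e by simp
      then have "x \<in> V" "y \<in> V" using G unfolding simple_graph_def by auto
      then show ?thesis using uv sum_some[OF G, of x ?g] sum_some[OF G, of y ?g] ed exy gs by auto
    next
      fix y assume uv: "u = None" "v = Some y"
      then have y: "y \<in> V" using e by simp
      show ?thesis using uv sV sum_some[OF G y, of ?g] gs key[OF y] by auto
    next
      fix x assume uv: "u = Some x" "v = None"
      then have y: "x \<in> V" using e by simp
      show ?thesis using uv sV sum_some[OF G y, of ?g] gs key[OF y] by auto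
    next
      assume "u = None" "v = None" thus ?thesis using e by simp
    qed
  qed
  ultimately show ?thesis unfolding additive_coloring_def by blast
qed

theorem mainTheorem5:
  fixes V :: "'a set" and E :: "'a \<Rightarrow> 'a \<Rightarrow> bool"
  assumes "simple_graph V E"
    and "\<forall>v\<in>V. \<not> universal V E v"
  shows "additive_chromatic (join_K1_V V) (join_K1_E V E) = additive_chromatic V E"
proof -
  have "\<And>k. (k \<ge> 1 \<and> (\<exists>f. additive_coloring (join_K1_V V) (join_K1_E V E) k f))
           = (k \<ge> 1 \<and> (\<exists>f. additive_coloring V E k f))"
    using dir1[OF assms(1)] dir2[OF assms] by blast
  then show ?thesis unfolding additive_chromatic_def by simp
qed

end
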